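(* Let $n=2k+1$ with $k\ge 1$. Then $\{d_i : i=1,2,\ldots,n\}$ is a strong resolving set of $S_n$.
   Context: For $n\ge 3$, $S_n$ is the graph with vertex set $\{a_i,b_i,c_i,d_i : 1\le i\le n\}$ and edge set $\{a_ia_{i+1}, b_ib_{i+1}, c_ic_{i+1}, d_id_{i+1}, a_{i+1}b_i, a_ib_i, b_ic_i, c_id_i : 1\le i\le n\}$, indices taken modulo $n$. $d$ is the graph distance. A vertex $w$ strongly resolves distinct vertices $u,v$ if $d(v,w)=d(v,u)+d(u,w)$ or $d(u,w)=d(u,v)+d(v,w)$. A set $S$ is a strong resolving set if every two distinct vertices are strongly resolved by some vertex of $S$. *)

theory Defs
  imports Main
begin

datatype vtx = A nat | B nat | C nat | D nat

definition Sverts :: "nat \<Rightarrow> vtx set" where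
  "Sverts n = {A i | i. i \<in> {1..n}} \<union> {B i | i. i \<in> {1..n}}
            \<union> {C i | i. i \<in> {1..n}} \<union> {D i | i. i \<in> {1..n}}"

definition nxt :: "nat \<Rightarrow> nat \<Rightarrow> nat" where
  "nxt n i = i mod n + 1"

definition Sedges0 :: "nat \<Rightarrow> (vtx \<times> vtx) set" where
  "Sedges0 n = (\<Union>i\<in>{1..n}.
     {(A i, A (nxt n i)), (B i, B (nxt n i)), (C i, C (nxt n i)), (D i, D (nxt n i)),
      (A (nxt n i), B i), (A i, B i), (B i, C i), (C i, D i)})"

definition Sedges :: "nat \<Rightarrow> (vtx \<times> vtx) set" where
  "Sedges n = Sedges0 n \<union> (Sedges0 n)\<inverse>"

definition Sdist :: "nat \<Rightarrow> vtx \<Rightarrow> vtx \<Rightarrow> nat" where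
  "Sdist n u v = (LEAST k. (u, v) \<in> (Sedges n) ^^ k)"

definition strongly_resolves :: "nat \<Rightarrow> vtx \<Rightarrow> vtx \<Rightarrow> vtx \<Rightarrow> bool" where
  "strongly_resolves n w u v \<longleftrightarrow>
     Sdist n v w = Sdist n v u + Sdist n u w \<or> Sdist n u w = Sdist n u v + Sdist n v w"

definition strong_resolving_set :: "nat \<Rightarrow> vtx set \<Rightarrow> bool" where
  "strong_resolving_set n S \<longleftrightarrow> S \<subseteq> Sverts n \<and>
     (\<forall>u\<in>Sverts n. \<forall>v\<in>Sverts n. u \<noteq> v \<longrightarrow> (\<exists>w\<in>S. strongly_resolves n w u v))"

end

theory Submission
  imports Defs
begin

definition fw :: "nat \<Rightarrow> nat \<Rightarrow> nat \<Rightarrow> nat" where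
  "fw n i j = (if i \<le> j then j - i else n + j - i)"
definition cd :: "nat \<Rightarrow> nat \<Rightarrow> nat \<Rightarrow> nat" where
  "cd n i j = min (fw n i j) (fw n j i)"
definition prv :: "nat \<Rightarrow> nat \<Rightarrow> nat" where
  "prv n i = (if i = 1 then n else i - 1)"

lemma nxt_eq: "1 \<le> i \<Longrightarrow> i \<le> n \<Longrightarrow> nxt n i = (if i = n then 1 else Suc i)"
  unfolding nxt_def by auto

lemma nxt_valid: "1 \<le> i \<Longrightarrow> i \<le> n \<Longrightarrow> 1 \<le> nxt n i \<and> nxt n i \<le> n"
  by (simp add: nxt_eq)

lemma prv_valid: "1 \<le> i \<Longrightarrow> i \<le> n \<Longrightarrow> 1 \<le> prv n i \<and> prv n i \<le> n"
  unfolding prv_def by auto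

lemma prv_nxt: "1 \<le> i \<Longrightarrow> i \<le> n \<Longrightarrow> prv n (nxt n i) = i"
  by (simp add: prv_def nxt_eq)

lemma nxt_prv: "1 \<le> i \<Longrightarrow> i \<le> n \<Longrightarrow> nxt n (prv n i) = i"
  unfolding prv_def by (auto simp: nxt_eq)

lemma cd_self: "cd n i i = 0"
  by (simp add: cd_def fw_def)

lemma cd_nxt: "1 \<le> i \<Longrightarrow> i \<le> n \<Longrightarrow> 1 \<le> j \<Longrightarrow> j \<le> n \<Longrightarrow>
   cd n (nxt n i) j \<le> Suc (cd n i j) \<and> cd n i j \<le> Suc (cd n (nxt n i) j)"
  apply (cases "i = n"; cases "i \<le> j"; cases "Suc i \<le> j")
  apply (simp_all add: nxt_eq cd_def fw_def)
  apply (simp_all add: min_def split: if_split)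
  apply arith+
  done

lemma fw_lt: "1 \<le> i \<Longrightarrow> i \<le> n \<Longrightarrow> 1 \<le> m \<Longrightarrow> m \<le> n \<Longrightarrow> fw n i m < n"
  unfolding fw_def by auto

lemma fw_0: "1 \<le> i \<Longrightarrow> i \<le> n \<Longrightarrow> 1 \<le> m \<Longrightarrow> m \<le> n \<Longrightarrow> fw n i m = 0 \<longleftrightarrow> i = m"
  unfolding fw_def by auto

lemma fw_sum: "1 \<le> i \<Longrightarrow> i \<le> n \<Longrightarrow> 1 \<le> m \<Longrightarrow> m \<le> n \<Longrightarrow> i \<noteq> m \<Longrightarrow> fw n m i = n - fw n i m"
  unfolding fw_def by auto

lemma fw_prv2: "1 \<le> i \<Longrightarrow> i \<le> n \<Longrightarrow> 1 \<le> m \<Longrightarrow> m \<le> n \<Longrightarrow> i \<noteq> m \<Longrightarrow>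
   fw n i (prv n m) = fw n i m - 1"
  unfolding fw_def prv_def by auto

lemma fw_prv1: "1 \<le> i \<Longrightarrow> i \<le> n \<Longrightarrow> 1 \<le> m \<Longrightarrow> m \<le> n \<Longrightarrow> Suc (fw n i m) < n \<Longrightarrow>
   fw n (prv n i) m = Suc (fw n i m)"
  unfolding fw_def prv_def by auto

lemma fw_prv12: "1 \<le> i \<Longrightarrow> i \<le> n \<Longrightarrow> 1 \<le> m \<Longrightarrow> m \<le> n \<Longrightarrow>
   fw n (prv n i) (prv n m) = fw n i m"
  unfolding fw_def prv_def by auto

lemma odd_fact:
  assumes i: "1 \<le> i" "i \<le> n" and m: "1 \<le> m" "m \<le> n" and mi: "m \<noteq> i" and nk: "n = 2*k+1"
    and h: "cd n (prv n m) i < cd n m i"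
  shows "min (cd n m (prv n i)) (cd n (prv n m) (prv n i)) = cd n m i"
proof -
  define d where "d = fw n i m"
  have pi: "1 \<le> prv n i" "prv n i \<le> n" using i by (auto simp: prv_def)
  have pm: "1 \<le> prv n m" "prv n m \<le> n" using m by (auto simp: prv_def)
  have dn: "d < n" "0 < d" using fw_lt[OF i m] fw_0[OF i m] mi unfolding d_def by auto
  have c1: "cd n m i = min (n - d) d"
    unfolding cd_def d_def using fw_sum[OF i m] mi by simp
  have c4: "cd n (prv n m) (prv n i) = min (n - d) d"
  proof -
    have "prv n i \<noteq> prv n m" using mi i m unfolding prv_def by (auto split: if_splits)
    then show ?thesis unfolding cd_def d_def using fw_sum[OF pi pm] fw_prv12[OF i m] by simp
  qed
  have dk: "d \<le> k"
  proof (cases "d = 1")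
    case True then show ?thesis using nk dn by simp
  next
    case False
    have f2: "fw n i (prv n m) = d - 1" using fw_prv2[OF i m] mi unfolding d_def by simp
    then have "i \<noteq> prv n m" using fw_0[OF i pm] False dn by simp
    then have "cd n (prv n m) i = min (n - (d - 1)) (d - 1)"
      unfolding cd_def using fw_sum[OF i pm] f2 by simp
    then show ?thesis using h c1 nk dn False by (simp add: min_def split: if_splits)
  qed
  have f3: "fw n (prv n i) m = Suc d" using fw_prv1[OF i m] dk nk dn unfolding d_def by simp
  have "prv n i \<noteq> m" using fw_0[OF pi m] f3 by simp
  then have c3: "cd n m (prv n i) = min (n - Suc d) (Suc d)"
    unfolding cd_def using fw_sum[OF pi m] f3 by simp
  show ?thesis using c1 c3 c4 dk nk by (simp add: min_def, arith)
qed

lemma fw_step: "1 \<le> i \<Longrightarrow> i \<le> n \<Longrightarrow> 1 \<le> j \<Longrightarrow> j \<le> n \<Longrightarrow> fw n i j = Suc k \<Longrightarrow>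
   fw n (nxt n i) j = k"
  apply (cases "i = n"; cases "i \<le> j")
  apply (simp_all add: nxt_eq fw_def split: if_split_asm)
  apply arith+
  done

lemma fw_zero: "1 \<le> i \<Longrightarrow> i \<le> n \<Longrightarrow> 1 \<le> j \<Longrightarrow> j \<le> n \<Longrightarrow> fw n i j = 0 \<Longrightarrow> i = j"
  by (simp add: fw_def split: if_split_asm)

fun G :: "nat \<Rightarrow> nat \<Rightarrow> vtx \<Rightarrow> nat" where
  "G n j (D i) = cd n i j"
| "G n j (C i) = Suc (cd n i j)"
| "G n j (B i) = 2 + cd n i j"
| "G n j (A i) = 3 + min (cd n i j) (cd n (prv n i) j)"

lemma edge_G0:
  assumes "(x, y) \<in> Sedges0 n" "1 \<le> j" "j \<le> n"
  shows "G n j x \<le> Suc (G n j y) \<and> G n j y \<le> Suc (G n j x)"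
proof -
  from assms(1) obtain i where i: "1 \<le> i" "i \<le> n" and
    e: "(x,y) \<in> {(A i, A (nxt n i)), (B i, B (nxt n i)), (C i, C (nxt n i)), (D i, D (nxt n i)),
      (A (nxt n i), B i), (A i, B i), (B i, C i), (C i, D i)}"
    unfolding Sedges0_def by auto
  have p: "1 \<le> prv n i" "prv n i \<le> n" using prv_valid[OF i] by auto
  have c1: "cd n (nxt n i) j \<le> Suc (cd n i j) \<and> cd n i j \<le> Suc (cd n (nxt n i) j)"
    using cd_nxt[OF i assms(2,3)] .
  have c2: "cd n i j \<le> Suc (cd n (prv n i) j) \<and> cd n (prv n i) j \<le> Suc (cd n i j)"
    using cd_nxt[OF p assms(2,3)] nxt_prv[OF i] by simp
  have pn: "prv n (nxt n i) = i" using prv_nxt[OF i] .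
  from e consider "x = A i" "y = A (nxt n i)" | "x = B i" "y = B (nxt n i)"
    | "x = C i" "y = C (nxt n i)" | "x = D i" "y = D (nxt n i)"
    | "x = A (nxt n i)" "y = B i" | "x = A i" "y = B i" | "x = B i" "y = C i"
    | "x = C i" "y = D i" by blast
  then show ?thesis
    by cases (use c1 c2 pn in \<open>simp add: min_def split: if_split; arith\<close>)+
qed

lemma edge_G:
  assumes "(x, y) \<in> Sedges n" "1 \<le> j" "j \<le> n"
  shows "G n j x \<le> Suc (G n j y)"
  using assms edge_G0[of x y n j] edge_G0[of y x n j] unfolding Sedges_def by auto

lemma lowG: "(x, D j) \<in> Sedges n ^^ k \<Longrightarrow> 1 \<le> j \<Longrightarrow> j \<le> n \<Longrightarrow> G n j x \<le> k"
proof (induction k arbitrary: x)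
  case 0
  then show ?case by (simp add: cd_self)
next
  case (Suc k)
  then obtain y where "(x,y) \<in> Sedges n" "(y, D j) \<in> Sedges n ^^ k"
    using relpow_Suc_D2 by metis
  then show ?case using Suc edge_G[of x y n j] by fastforce
qed

lemma Sdist_le: "(u,v) \<in> Sedges n ^^ k \<Longrightarrow> Sdist n u v \<le> k"
  unfolding Sdist_def by (rule Least_le)

lemma Sdist_path: "(u,v) \<in> Sedges n ^^ k \<Longrightarrow> (u,v) \<in> Sedges n ^^ Sdist n u v"
  unfolding Sdist_def by (rule LeastI)

lemma Sdist_0: "Sdist n u u = 0"
  using Sdist_le[where u=u and v=u and n=n and k=0] by simp

lemma rel_comp: "(x,y) \<in> R ^^ a \<Longrightarrow> (y,z) \<in> R ^^ b \<Longrightarrow> (x,z) \<in> R ^^ (a + b)"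
  by (auto simp: relpow_add)

lemma geo:
  assumes "(v,u) \<in> Sedges n ^^ L1" "(u,w) \<in> Sedges n ^^ L2"
    and "\<And>k. (v,w) \<in> Sedges n ^^ k \<Longrightarrow> L1 + L2 \<le> k"
  shows "Sdist n v w = Sdist n v u + Sdist n u w"
proof -
  have a: "Sdist n v u \<le> L1" "Sdist n u w \<le> L2"
    using Sdist_le assms(1,2) by auto
  have "(v,w) \<in> Sedges n ^^ (Sdist n v u + Sdist n u w)"
    using rel_comp[OF Sdist_path[OF assms(1)] Sdist_path[OF assms(2)]] .
  then have "L1 + L2 \<le> Sdist n v u + Sdist n u w" using assms(3) by blast
  then have b: "Sdist n v u = L1" "Sdist n u w = L2" using a by auto
  have "(v,w) \<in> Sedges n ^^ (L1 + L2)" using rel_comp[OF assms(1,2)] .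
  then have "(v,w) \<in> Sedges n ^^ Sdist n v w" "Sdist n v w \<le> L1 + L2"
    using Sdist_path Sdist_le by auto
  then have "Sdist n v w = L1 + L2" using assms(3) by (meson le_antisym)
  then show ?thesis using b by simp
qed

lemma res:
  assumes "(v,u) \<in> Sedges n ^^ L1" "(u, D j) \<in> Sedges n ^^ L2" "G n j v = L1 + L2"
    "1 \<le> j" "j \<le> n"
  shows "strongly_resolves n (D j) u v"
proof -
  have "Sdist n v (D j) = Sdist n v u + Sdist n u (D j)"
    by (rule geo[OF assms(1,2)]) (use lowG assms(3-5) in metis)
  then show ?thesis unfolding strongly_resolves_def by simp
qed

lemma sr_sym: "strongly_resolves n w u v = strongly_resolves n w v u"
  unfolding strongly_resolves_def by auto

lemma sr_self: "strongly_resolves n u u v"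
  unfolding strongly_resolves_def by (simp add: Sdist_0)

lemma in_E: "(x,y) \<in> Sedges0 n \<Longrightarrow> (x,y) \<in> Sedges n"
  by (simp add: Sedges_def)

lemma E_sym: "(x,y) \<in> Sedges n \<Longrightarrow> (y,x) \<in> Sedges n"
  by (auto simp: Sedges_def)

lemma E1: "(x,y) \<in> Sedges n \<Longrightarrow> (x,y) \<in> Sedges n ^^ 1"
  by simp

lemma relpow_sym: "(x,y) \<in> Sedges n ^^ k \<Longrightarrow> (y,x) \<in> Sedges n ^^ k"
proof (induction k arbitrary: x)
  case 0 then show ?case by simp
next
  case (Suc k)
  then obtain z where "(x,z) \<in> Sedges n" "(z,y) \<in> Sedges n ^^ k"
    using relpow_Suc_D2 by metis
  then show ?case using Suc.IH E_sym relpow_Suc_I by metis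
qed

lemma in_E0:
  assumes "1 \<le> i" "i \<le> n"
    and "p \<in> {(A i, A (nxt n i)), (B i, B (nxt n i)), (C i, C (nxt n i)), (D i, D (nxt n i)),
      (A (nxt n i), B i), (A i, B i), (B i, C i), (C i, D i)}"
  shows "p \<in> Sedges n"
proof -
  have "p \<in> Sedges0 n" unfolding Sedges0_def
    by (rule UN_I[of i]) (use assms in simp_all)
  then show ?thesis by (simp add: Sedges_def)
qed

lemma eA: "1 \<le> i \<Longrightarrow> i \<le> n \<Longrightarrow> (A i, A (nxt n i)) \<in> Sedges n"
  by (rule in_E0[of i]) auto
lemma eB: "1 \<le> i \<Longrightarrow> i \<le> n \<Longrightarrow> (B i, B (nxt n i)) \<in> Sedges n"
  by (rule in_E0[of i]) auto
lemma eC: "1 \<le> i \<Longrightarrow> i \<le> n \<Longrightarrow> (C i, C (nxt n i)) \<in> Sedges n"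
  by (rule in_E0[of i]) auto
lemma eAB: "1 \<le> i \<Longrightarrow> i \<le> n \<Longrightarrow> (A i, B i) \<in> Sedges n"
  by (rule in_E0[of i]) auto
lemma eAB': "1 \<le> i \<Longrightarrow> i \<le> n \<Longrightarrow> (A i, B (prv n i)) \<in> Sedges n"
proof -
  assume i: "1 \<le> i" "i \<le> n"
  have p: "1 \<le> prv n i" "prv n i \<le> n" using prv_valid[OF i] by auto
  have "(A (nxt n (prv n i)), B (prv n i)) \<in> Sedges n"
    by (rule in_E0[OF p]) simp
  then show ?thesis using nxt_prv[OF i] by simp
qed
lemma eBC: "1 \<le> i \<Longrightarrow> i \<le> n \<Longrightarrow> (B i, C i) \<in> Sedges n"
  by (rule in_E0[of i]) auto
lemma eCD: "1 \<le> i \<Longrightarrow> i \<le> n \<Longrightarrow> (C i, D i) \<in> Sedges n"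
  by (rule in_E0[of i]) auto

lemma cyc_walk:
  assumes f: "\<And>i. 1 \<le> i \<Longrightarrow> i \<le> n \<Longrightarrow> (f i, f (nxt n i)) \<in> Sedges n"
    and i: "1 \<le> i" "i \<le> n" and j: "1 \<le> j" "j \<le> n"
  shows "(f i, f j) \<in> Sedges n ^^ cd n i j"
proof -
  have F: "\<And>i'. 1 \<le> i' \<Longrightarrow> i' \<le> n \<Longrightarrow> 1 \<le> j' \<Longrightarrow> j' \<le> n \<Longrightarrow> fw n i' j' = k \<Longrightarrow>
      (f i', f j') \<in> Sedges n ^^ k" for k j'
  proof (induction k)
    case 0 then show ?case using fw_zero by auto
  next
    case (Suc k)
    have "fw n (nxt n i') j' = k" using fw_step[OF Suc.prems] .
    moreover have "1 \<le> nxt n i'" "nxt n i' \<le> n" using nxt_valid[OF Suc.prems(1,2)] by auto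
    ultimately have "(f (nxt n i'), f j') \<in> Sedges n ^^ k"
      using Suc.IH Suc.prems(3,4) by blast
    then show ?case using relpow_Suc_I2[OF f[OF Suc.prems(1,2)]] by blast
  qed
  have 1: "(f i, f j) \<in> Sedges n ^^ fw n i j" using F[OF i j refl] .
  have 2: "(f i, f j) \<in> Sedges n ^^ fw n j i" using relpow_sym[OF F[OF j i refl]] .
  show ?thesis using 1 2 unfolding cd_def min_def by auto
qed

lemma wA: "1 \<le> i \<Longrightarrow> i \<le> n \<Longrightarrow> 1 \<le> j \<Longrightarrow> j \<le> n \<Longrightarrow> (A i, A j) \<in> Sedges n ^^ cd n i j"
  by (rule cyc_walk[where f=A]) (auto intro: eA)
lemma wB: "1 \<le> i \<Longrightarrow> i \<le> n \<Longrightarrow> 1 \<le> j \<Longrightarrow> j \<le> n \<Longrightarrow> (B i, B j) \<in> Sedges n ^^ cd n i j"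
  by (rule cyc_walk[where f=B]) (auto intro: eB)
lemma wC: "1 \<le> i \<Longrightarrow> i \<le> n \<Longrightarrow> 1 \<le> j \<Longrightarrow> j \<le> n \<Longrightarrow> (C i, C j) \<in> Sedges n ^^ cd n i j"
  by (rule cyc_walk[where f=C]) (auto intro: eC)


lemma wD1: "1 \<le> i \<Longrightarrow> i \<le> n \<Longrightarrow> (C i, D i) \<in> Sedges n ^^ 1"
  using eCD by simp
lemma wD2: "1 \<le> i \<Longrightarrow> i \<le> n \<Longrightarrow> (B i, D i) \<in> Sedges n ^^ (1 + 1)"
  by (rule rel_comp[OF E1[OF eBC] E1[OF eCD]])
lemma wD3: "1 \<le> i \<Longrightarrow> i \<le> n \<Longrightarrow> (A i, D i) \<in> Sedges n ^^ (1 + (1 + 1))"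
  by (rule rel_comp[OF E1[OF eAB] wD2])
lemma wD3': "1 \<le> i \<Longrightarrow> i \<le> n \<Longrightarrow> (A i, D (prv n i)) \<in> Sedges n ^^ (1 + (1 + 1))"
  by (rule rel_comp[OF E1[OF eAB'] wD2]) (use prv_valid in auto)

lemma rCC: "1 \<le> i \<Longrightarrow> i \<le> n \<Longrightarrow> 1 \<le> m \<Longrightarrow> m \<le> n \<Longrightarrow>
  \<exists>j. 1 \<le> j \<and> j \<le> n \<and> strongly_resolves n (D j) (C i) (C m)"
  by (intro exI[of _ i] conjI, assumption+, rule res[OF wC wD1]) simp_all

lemma rCB: "1 \<le> i \<Longrightarrow> i \<le> n \<Longrightarrow> 1 \<le> m \<Longrightarrow> m \<le> n \<Longrightarrow>
  \<exists>j. 1 \<le> j \<and> j \<le> n \<and> strongly_resolves n (D j) (C i) (B m)"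
  by (intro exI[of _ i] conjI, assumption+, rule res[OF rel_comp[OF E1[OF eBC] wC] wD1]) simp_all

lemma rBB: "1 \<le> i \<Longrightarrow> i \<le> n \<Longrightarrow> 1 \<le> m \<Longrightarrow> m \<le> n \<Longrightarrow>
  \<exists>j. 1 \<le> j \<and> j \<le> n \<and> strongly_resolves n (D j) (B i) (B m)"
  by (intro exI[of _ i] conjI, assumption+, rule res[OF wB wD2]) simp_all

lemma rCA: assumes i: "1 \<le> i" "i \<le> n" and m: "1 \<le> m" "m \<le> n"
  shows "\<exists>j. 1 \<le> j \<and> j \<le> n \<and> strongly_resolves n (D j) (C i) (A m)"
proof (intro exI[of _ i] conjI i)
  have p: "1 \<le> prv n m" "prv n m \<le> n" using prv_valid[OF m] by auto
  show "strongly_resolves n (D i) (C i) (A m)"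
  proof (cases "cd n m i \<le> cd n (prv n m) i")
    case True
    show ?thesis
      by (rule res[OF rel_comp[OF E1[OF eAB[OF m]] rel_comp[OF E1[OF eBC[OF m]] wC[OF m i]]] wD1[OF i]])
         (use True i in \<open>simp_all add: min_def\<close>)
  next
    case False
    show ?thesis
      by (rule res[OF rel_comp[OF E1[OF eAB'[OF m]] rel_comp[OF E1[OF eBC[OF p]] wC[OF p i]]] wD1[OF i]])
         (use False i in \<open>simp_all add: min_def\<close>)
  qed
qed

lemma rBA: assumes i: "1 \<le> i" "i \<le> n" and m: "1 \<le> m" "m \<le> n"
  shows "\<exists>j. 1 \<le> j \<and> j \<le> n \<and> strongly_resolves n (D j) (B i) (A m)"
proof (intro exI[of _ i] conjI i)
  have p: "1 \<le> prv n m" "prv n m \<le> n" using prv_valid[OF m] by auto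
  show "strongly_resolves n (D i) (B i) (A m)"
  proof (cases "cd n m i \<le> cd n (prv n m) i")
    case True
    show ?thesis
      by (rule res[OF rel_comp[OF E1[OF eAB[OF m]] wB[OF m i]] wD2[OF i]])
         (use True i in \<open>simp_all add: min_def\<close>)
  next
    case False
    show ?thesis
      by (rule res[OF rel_comp[OF E1[OF eAB'[OF m]] wB[OF p i]] wD2[OF i]])
         (use False i in \<open>simp_all add: min_def\<close>)
  qed
qed

lemma rAA: assumes i: "1 \<le> i" "i \<le> n" and m: "1 \<le> m" "m \<le> n" and mi: "m \<noteq> i"
  and nk: "n = 2*k+1"
  shows "\<exists>j. 1 \<le> j \<and> j \<le> n \<and> strongly_resolves n (D j) (A i) (A m)"
proof (cases "cd n (prv n m) i < cd n m i")
  case False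
  show ?thesis
  proof (intro exI[of _ i] conjI i)
    show "strongly_resolves n (D i) (A i) (A m)"
      by (rule res[OF wA[OF m i] wD3[OF i]])
         (use False i in \<open>simp_all add: min_def cd_self\<close>)
  qed
next
  case True
  have p: "1 \<le> prv n i" "prv n i \<le> n" using prv_valid[OF i] by auto
  have o: "min (cd n m (prv n i)) (cd n (prv n m) (prv n i)) = cd n m i"
    using odd_fact[OF i m mi nk True] .
  show ?thesis
  proof (intro exI[of _ "prv n i"] conjI p)
    show "strongly_resolves n (D (prv n i)) (A i) (A m)"
      by (rule res[OF wA[OF m i] wD3'[OF i]])
         (use o p in \<open>simp_all add: cd_self\<close>)
  qed
qed

lemma Sverts_iff: "x \<in> Sverts n \<longleftrightarrow> (\<exists>i. 1 \<le> i \<and> i \<le> n \<and> (x = A i \<or> x = B i \<or> x = C i \<or> x = D i))"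
  unfolding Sverts_def by auto

lemma main_pair:
  assumes nk: "n = 2*k+1" and u: "u \<in> Sverts n" and v: "v \<in> Sverts n" and uv: "u \<noteq> v"
  shows "\<exists>j. 1 \<le> j \<and> j \<le> n \<and> strongly_resolves n (D j) u v"
proof -
  obtain i where i: "1 \<le> i" "i \<le> n" "u = A i \<or> u = B i \<or> u = C i \<or> u = D i"
    using u unfolding Sverts_iff by blast
  obtain m where m: "1 \<le> m" "m \<le> n" "v = A m \<or> v = B m \<or> v = C m \<or> v = D m"
    using v unfolding Sverts_iff by blast
  have sw: "\<exists>j. 1 \<le> j \<and> j \<le> n \<and> strongly_resolves n (D j) v u \<Longrightarrow> ?thesis"
    using sr_sym by blast
  have Du: "u = D i \<Longrightarrow> ?thesis" using i sr_self by blast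
  have Dv: "v = D m \<Longrightarrow> ?thesis" using m sr_self sw by blast
  show ?thesis
    using i(3) m(3)
  proof (elim disjE)
  qed (use Du Dv sw uv rCC[OF i(1,2) m(1,2)] rCC[OF m(1,2) i(1,2)] rCB[OF i(1,2) m(1,2)] rCB[OF m(1,2) i(1,2)]
     rBB[OF i(1,2) m(1,2)] rCA[OF i(1,2) m(1,2)] rCA[OF m(1,2) i(1,2)]
     rBA[OF i(1,2) m(1,2)] rBA[OF m(1,2) i(1,2)] rAA[OF i(1,2) m(1,2) _ nk] in auto)
qed

theorem lemma3p10:
  fixes n k :: nat
  assumes "k \<ge> 1" and "n = 2 * k + 1"
  shows "strong_resolving_set n {D i | i. i \<in> {1..n}}"
  unfolding strong_resolving_set_def
proof (intro conjI ballI impI)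
  show "{D i | i. i \<in> {1..n}} \<subseteq> Sverts n" unfolding Sverts_def by auto
next
  fix u v assume "u \<in> Sverts n" "v \<in> Sverts n" "u \<noteq> v"
  then obtain j where "1 \<le> j" "j \<le> n" "strongly_resolves n (D j) u v"
    using main_pair assms(2) by blast
  then show "\<exists>w\<in>{D i | i. i \<in> {1..n}}. strongly_resolves n w u v" by auto
qed

end
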